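(* Let $D$ be a Dyck path of semilength $n$, let $\mathcal N$ be the set of $k\in\{1,\dots,n\}$ such that row $k$ contains no valley of $D$, and let $\pi$ be the permutation associated with $D$ by the Billey–Jockusch–Stanley bijection. Then $k\in\mathcal N$ if and only if $\pi^{-1}(k)\ge k$, i.e. if and only if $\pi^{-1}(k)$ is a fixpoint or a deficiency of $\pi$.
   Context: Work in an $n\times n$ array of unit cells; the cell $(i,j)$ is the one in column $i$ (columns numbered $1,\dots,n$ from left to right) and row $j$ (rows numbered $1,\dots,n$ from bottom to top), i.e. the square $[i-1,i]\times[j-1,j]$. A Dyck path of semilength $n$ is a lattice path from $(0,0)$ to $(n,n)$ with unit north and east steps that never goes below the line $y=x$. A valley of $D$ is an east step immediately followed by a north step; if the east step is the $k$-th east step and the north step is the $\ell$-th north step, the valley is at position $(k,\ell)$, the cell enclosed by these two steps (it lies in row $\ell$). Billey–Jockusch–Stanley bijection: put a cross in every valley cell of $D$; then, for the columns $i=1,2,\dots,n$ in this order, if column $i$ does not yet contain a cross, put a cross in the lowest cell of column $i$ whose row does not yet contain a cross. The crosses form a permutation matrix, and $\pi(i)$ is the row of the cross in column $i$. An index $m$ is a fixpoint of $\pi$ if $\pi(m)=m$ and a deficiency if $\pi(m)<m$. *)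

theory Defs
  imports Main
begin

text \<open>A lattice path is a list of steps: True = north step, False = east step.\<close>

definition n_north :: "bool list \<Rightarrow> nat" where
  "n_north xs = length (filter (\<lambda>s. s) xs)"

definition n_east :: "bool list \<Rightarrow> nat" where
  "n_east xs = length (filter (\<lambda>s. \<not> s) xs)"

definition dyck :: "nat \<Rightarrow> bool list \<Rightarrow> bool" where
  "dyck n w \<longleftrightarrow> length w = 2 * n \<and> n_north w = n \<and> n_east w = n \<and>
     (\<forall>i \<le> length w. n_east (take i w) \<le> n_north (take i w))"

text \<open>Valleys: an east step (index i) immediately followed by a north step (index i+1);
  position (k,l): k = index of that east step among east steps, l = index of the
  north step among north steps (both 1-based).\<close>
definition valleys :: "bool list \<Rightarrow> (nat \<times> nat) set" where
  "valleys w = {(n_east (take (i + 1) w), n_north (take (i + 2) w)) | i.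
                 i + 1 < length w \<and> \<not> w ! i \<and> w ! (i + 1)}"

text \<open>Billey--Jockusch--Stanley: crosses in valley cells; then, column by column,
  a column without a cross gets a cross in the lowest row (among 1..n) not yet containing
  a cross.  bjs_aux V n i gives the rows of the crosses of columns 1..i.\<close>
fun bjs_aux :: "(nat \<times> nat) set \<Rightarrow> nat \<Rightarrow> nat \<Rightarrow> nat \<Rightarrow> nat" where
  "bjs_aux V n 0 = (\<lambda>_. 0)"
| "bjs_aux V n (Suc i) =
     (let p = bjs_aux V n i in
      if \<exists>r. (Suc i, r) \<in> V then p(Suc i := (THE r. (Suc i, r) \<in> V))
      else p(Suc i := (LEAST r. 1 \<le> r \<and> r \<le> n \<and> r \<notin> snd ` V \<and> r \<notin> p ` {1..i})))"

definition bjs :: "nat \<Rightarrow> bool list \<Rightarrow> nat \<Rightarrow> nat" where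
  "bjs n w = bjs_aux (valleys w) n n"

definition no_valley_rows :: "nat \<Rightarrow> bool list \<Rightarrow> nat set" where
  "no_valley_rows n w = {k \<in> {1..n}. \<not> (\<exists>c. (c, k) \<in> valleys w)}"

definition fixpoint :: "(nat \<Rightarrow> nat) \<Rightarrow> nat \<Rightarrow> bool" where
  "fixpoint p m \<longleftrightarrow> p m = m"

definition deficiency :: "(nat \<Rightarrow> nat) \<Rightarrow> nat \<Rightarrow> bool" where
  "deficiency p m \<longleftrightarrow> p m < m"

end

theory Submission
  imports Defs
begin

lemma ne_app: "n_east (xs @ ys) = n_east xs + n_east ys" by (simp add: n_east_def)
lemma nn_app: "n_north (xs @ ys) = n_north xs + n_north ys" by (simp add: n_north_def)

lemma e_mono: assumes "j \<le> j'" shows "n_east (take j w) \<le> n_east (take j' w)"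
proof -
  obtain d where "j' = j + d" using assms le_Suc_ex by blast
  then show ?thesis by (simp add: take_add ne_app)
qed

lemma n_mono: assumes "j \<le> j'" shows "n_north (take j w) \<le> n_north (take j' w)"
proof -
  obtain d where "j' = j + d" using assms le_Suc_ex by blast
  then show ?thesis by (simp add: take_add nn_app)
qed

lemma e_step: "j < length w \<Longrightarrow> n_east (take (Suc j) w) = n_east (take j w) + (if w!j then 0 else 1)"
  by (simp add: take_Suc_conv_app_nth n_east_def)

lemma n_step: "j < length w \<Longrightarrow> n_north (take (Suc j) w) = n_north (take j w) + (if w!j then 1 else 0)"
  by (simp add: take_Suc_conv_app_nth n_north_def)

lemma e_strict: "i < i' \<Longrightarrow> i' < length w \<Longrightarrow> \<not> w!i' \<Longrightarrow> n_east (take (i+1) w) < n_east (take (i'+1) w)"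
  using e_step[of i' w] e_mono[of "i+1" i' w] by simp

lemma n_strict: "i < i' \<Longrightarrow> i' < length w \<Longrightarrow> w!i' \<Longrightarrow> n_north (take (i+1) w) < n_north (take (i'+1) w)"
  using n_step[of i' w] n_mono[of "i+1" i' w] by simp

lemma valley_range:
  assumes d: "dyck n w" and v: "(c,r) \<in> valleys w"
  shows "1 \<le> c \<and> c < r \<and> r \<le> n"
proof -
  obtain i where i: "c = n_east (take (i + 1) w)" "r = n_north (take (i + 2) w)"
    "i + 1 < length w" "\<not> w ! i" "w ! (i + 1)"
    using v unfolding valleys_def by blast
  have c1: "1 \<le> c" using i e_step[of i w] by simp
  have "n_east (take (i+1) w) \<le> n_north (take (i+1) w)" using d i(3) unfolding dyck_def by auto
  moreover have "n_north (take (i+2) w) = n_north (take (i+1) w) + 1"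
    using n_step[of "i+1" w] i by simp
  moreover have "n_north (take (i+2) w) \<le> n_north (take (length w) w)"
    using n_mono[of "i+2" "length w" w] i by simp
  moreover have "n_north w = n" using d unfolding dyck_def by simp
  ultimately show ?thesis using c1 i by auto
qed

lemma valley_colinj:
  assumes v: "(c,r) \<in> valleys w" and v': "(c,r') \<in> valleys w"
  shows "r = r'"
proof -
  obtain i where i: "c = n_east (take (i + 1) w)" "r = n_north (take (i + 2) w)"
    "i + 1 < length w" "\<not> w ! i" "w ! (i + 1)"
    using v unfolding valleys_def by blast
  obtain i' where i': "c = n_east (take (i' + 1) w)" "r' = n_north (take (i' + 2) w)"
    "i' + 1 < length w" "\<not> w ! i'" "w ! (i' + 1)"
    using v' unfolding valleys_def by blast
  have "i = i'"
  proof (rule ccontr)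
    assume "i \<noteq> i'"
    then consider "i < i'" | "i' < i" by linarith
    then show False
    proof cases
      case 1 then show ?thesis using e_strict[of i i' w] i i' by simp
    next
      case 2 then show ?thesis using e_strict[of i' i w] i i' by simp
    qed
  qed
  then show ?thesis using i i' by simp
qed

lemma valley_rowinj:
  assumes v: "(c,r) \<in> valleys w" and v': "(c',r) \<in> valleys w"
  shows "c = c'"
proof -
  obtain i where i: "c = n_east (take (i + 1) w)" "r = n_north (take (i + 2) w)"
    "i + 1 < length w" "\<not> w ! i" "w ! (i + 1)"
    using v unfolding valleys_def by blast
  obtain i' where i': "c' = n_east (take (i' + 1) w)" "r = n_north (take (i' + 2) w)"
    "i' + 1 < length w" "\<not> w ! i'" "w ! (i' + 1)"
    using v' unfolding valleys_def by blast
  have "i = i'"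
  proof (rule ccontr)
    assume "i \<noteq> i'"
    then consider "i < i'" | "i' < i" by linarith
    then show False
    proof cases
      case 1 then show ?thesis using n_strict[of "i+1" "i'+1" w] i i' by simp
    next
      case 2 then show ?thesis using n_strict[of "i'+1" "i+1" w] i i' by simp
    qed
  qed
  then show ?thesis using i i' by simp
qed

lemma step_ext:
  assumes inj: "inj_on p {1..i}" and rng: "p`{1..i} \<subseteq> {1..n}"
    and prp: "\<forall>c\<in>{1..i}. Q c (p c)" and v: "v \<in> {1..n}" and vn: "v \<notin> p`{1..i}"
    and Qv: "Q (Suc i) v"
  shows "inj_on (p(Suc i:=v)) {1..Suc i} \<and> p(Suc i:=v)`{1..Suc i} \<subseteq> {1..n} \<and>
     (\<forall>c\<in>{1..Suc i}. Q c ((p(Suc i:=v)) c))"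
proof (intro conjI)
  have ins: "{1..Suc i} = insert (Suc i) {1..i}" by auto
  have e: "inj_on (p(Suc i:=v)) {1..i} = inj_on p {1..i}" by (rule inj_on_cong) auto
  have img: "p(Suc i := v) ` {1..i} = p ` {1..i}" by auto
  show "inj_on (p(Suc i:=v)) {1..Suc i}" unfolding ins inj_on_insert
    using e inj vn img by auto
  show "p(Suc i:=v)`{1..Suc i} \<subseteq> {1..n}" unfolding ins using img rng v by auto
  show "\<forall>c\<in>{1..Suc i}. Q c ((p(Suc i:=v)) c)"
  proof
    fix c assume c: "c \<in> {1..Suc i}"
    show "Q c ((p(Suc i:=v)) c)"
    proof (cases "c = Suc i")
      case True then show ?thesis using Qv by simp
    next
      case False then have "c \<in> {1..i}" using c by auto
      then show ?thesis using prp False by simp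
    qed
  qed
qed

lemma bjs_inv:
  fixes V :: "(nat \<times> nat) set"
  assumes sub: "\<And>c r. (c,r)\<in>V \<Longrightarrow> 1 \<le> c \<and> c < r \<and> r \<le> n"
    and colinj: "\<And>c r r'. (c,r)\<in>V \<Longrightarrow> (c,r')\<in>V \<Longrightarrow> r=r'"
    and rowinj: "\<And>c c' r. (c,r)\<in>V \<Longrightarrow> (c',r)\<in>V \<Longrightarrow> c=c'"
  shows "i \<le> n \<Longrightarrow> inj_on (bjs_aux V n i) {1..i} \<and> bjs_aux V n i ` {1..i} \<subseteq> {1..n} \<and>
     (\<forall>c\<in>{1..i}. if c \<in> fst`V then (c, bjs_aux V n i c)\<in>V
        else bjs_aux V n i c \<notin> snd`V \<and> bjs_aux V n i c \<le> c)"
proof (induction i)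
  case 0 show ?case by simp
next
  case (Suc i)
  define p where "p = bjs_aux V n i"
  have i: "i < n" using Suc.prems by simp
  from Suc.IH i have inj: "inj_on p {1..i}" and rng: "p ` {1..i} \<subseteq> {1..n}"
    and prp: "\<forall>c\<in>{1..i}. if c\<in>fst`V then (c,p c)\<in>V else p c \<notin> snd`V \<and> p c \<le> c"
    unfolding p_def by auto
  have ins: "{1..Suc i} = insert (Suc i) {1..i}" by auto
  show ?case
  proof (cases "Suc i \<in> fst ` V")
    case True
    then obtain r where r: "(Suc i, r)\<in>V" by force
    have ex: "\<exists>r. (Suc i, r)\<in>V" using r by blast
    have the: "(THE r. (Suc i, r)\<in>V) = r" using r colinj by blast
    have q: "bjs_aux V n (Suc i) = p(Suc i := r)" using ex the by (simp add: p_def Let_def)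
    have rnot: "r \<notin> p ` {1..i}"
    proof
      assume "r \<in> p`{1..i}" then obtain c where c: "c\<in>{1..i}" "p c = r" by auto
      show False
      proof (cases "c \<in> fst`V")
        case True then have "(c, r) \<in> V" using bspec[OF prp c(1)] c(2) unfolding if_P[OF True] by blast
        then have "c = Suc i" using rowinj r by blast
        with c show False by simp
      next
        case False then have "r \<notin> snd`V" using bspec[OF prp c(1)] c(2) unfolding if_not_P[OF False] by blast
        with r show False by force
      qed
    qed
    have rr: "r \<in> {1..n}" using sub[OF r] by auto
    have img: "p(Suc i := r) ` {1..i} = p ` {1..i}" by auto
    show ?thesis unfolding q
      by (rule step_ext[where Q="\<lambda>c x. if c \<in> fst`V then (c,x)\<in>V else x \<notin> snd`V \<and> x \<le> c", OF inj rng prp rr rnot])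
         (simp only: if_P[OF True] r)
  next
    case False
    define A where "A = {1..Suc i} - snd`V"
    define B where "B = p ` ({1..i} - fst`V)"
    have BA: "B \<subseteq> A"
    proof
      fix x assume "x \<in> B"
      then obtain c where c: "c \<in> {1..i}" "c \<notin> fst`V" "x = p c" unfolding B_def by blast
      have "p c \<notin> snd`V \<and> p c \<le> c" using bspec[OF prp c(1)] unfolding if_not_P[OF c(2)] .
      moreover have "p c \<in> {1..n}" using rng c(1) by blast
      ultimately show "x \<in> A" unfolding A_def using c by auto
    qed
    have cB: "card B = card ({1..i} - fst`V)" unfolding B_def
      by (rule card_image) (rule inj_on_subset[OF inj], auto)
    have c1: "card ({1..i} - fst`V) = i - card ({1..i} \<inter> fst`V)"
      by (simp add: card_Diff_subset_Int)
    have c2: "card A = Suc i - card ({1..Suc i} \<inter> snd`V)" unfolding A_def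
      by (simp add: card_Diff_subset_Int)
    define W where "W = {x\<in>V. snd x \<le> Suc i}"
    have finW: "finite W"
    proof -
      have "W \<subseteq> {1..n} \<times> {1..n}" unfolding W_def using sub by force
      then show ?thesis using finite_subset by blast
    qed
    have sW: "snd ` W = {1..Suc i} \<inter> snd`V" unfolding W_def using sub by force
    have fW: "fst ` W \<subseteq> {1..i} \<inter> fst`V" unfolding W_def using sub by force
    have iW: "inj_on fst W" unfolding W_def inj_on_def using colinj by auto
    have "card ({1..Suc i} \<inter> snd`V) \<le> card W" unfolding sW[symmetric]
      by (rule card_image_le[OF finW])
    also have "\<dots> = card (fst ` W)" using card_image[OF iW] by simp
    also have "\<dots> \<le> card ({1..i} \<inter> fst`V)" by (rule card_mono) (use fW in auto)
    finally have le: "card ({1..Suc i} \<inter> snd`V) \<le> card ({1..i} \<inter> fst`V)" .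
    have "card ({1..i} \<inter> fst`V) \<le> i"
      using card_mono[of "{1..i}" "{1..i} \<inter> fst`V"] by auto
    then have "card B < card A" using cB c1 c2 le by linarith
    then have "\<not> A \<subseteq> B" using card_mono[of B A] by (auto simp: B_def)
    then obtain r where rA: "r \<in> A" and rB: "r \<notin> B" by blast
    have r1: "1 \<le> r" "r \<le> Suc i" "r \<notin> snd`V" using rA unfolding A_def by auto
    have r2: "r \<notin> p`{1..i}"
    proof
      assume "r \<in> p`{1..i}" then obtain c where c: "c\<in>{1..i}" "p c = r" by auto
      show False
      proof (cases "c \<in> fst`V")
        case True then have "(c, r) \<in> V" using bspec[OF prp c(1)] c(2) unfolding if_P[OF True] by blast
        with r1 show False by force
      next
        case False then have "r \<in> B" unfolding B_def using c by auto
        with rB show False by simp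
      qed
    qed
    define P where "P = (\<lambda>r. 1 \<le> r \<and> r \<le> n \<and> r \<notin> snd`V \<and> r \<notin> p`{1..i})"
    define r0 where "r0 = (LEAST r. P r)"
    have Pr: "P r" unfolding P_def using r1 r2 i by auto
    have Pr0: "P r0" unfolding r0_def by (rule LeastI[of P r, OF Pr])
    have r0le: "r0 \<le> Suc i" using Least_le[of P r, OF Pr] r1 unfolding r0_def by simp
    have ex: "\<not> (\<exists>r. (Suc i, r)\<in>V)" using False by force
    have q: "bjs_aux V n (Suc i) = p(Suc i := r0)"
      using ex by (simp add: p_def Let_def r0_def P_def)
    have img: "p(Suc i := r0) ` {1..i} = p ` {1..i}" by auto
    have r0n: "r0 \<in> {1..n}" "r0 \<notin> p`{1..i}" "r0 \<notin> snd`V" using Pr0 unfolding P_def by auto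
    show ?thesis unfolding q
      by (rule step_ext[where Q="\<lambda>c x. if c \<in> fst`V then (c,x)\<in>V else x \<notin> snd`V \<and> x \<le> c", OF inj rng prp r0n(1,2)])
         (simp only: if_not_P[OF False] r0le r0n(3) simp_thms)
  qed
qed

theorem mainTheorem5:
  fixes n :: nat and w :: "bool list" and k :: nat
  assumes "dyck n w" and "k \<in> {1..n}"
  shows "(k \<in> no_valley_rows n w \<longleftrightarrow> inv_into {1..n} (bjs n w) k \<ge> k) \<and>
         (k \<in> no_valley_rows n w \<longleftrightarrow>
            fixpoint (bjs n w) (inv_into {1..n} (bjs n w) k) \<or>
            deficiency (bjs n w) (inv_into {1..n} (bjs n w) k))"
proof -
  define V where "V = valleys w"
  define p where "p = bjs n w"
  have sub: "\<And>c r. (c,r)\<in>V \<Longrightarrow> 1 \<le> c \<and> c < r \<and> r \<le> n"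
    unfolding V_def using valley_range[OF assms(1)] by blast
  have colinj: "\<And>c r r'. (c,r)\<in>V \<Longrightarrow> (c,r')\<in>V \<Longrightarrow> r=r'"
    unfolding V_def using valley_colinj by blast
  have rowinj: "\<And>c c' r. (c,r)\<in>V \<Longrightarrow> (c',r)\<in>V \<Longrightarrow> c=c'"
    unfolding V_def using valley_rowinj by blast
  have pV: "p = bjs_aux V n n" unfolding p_def bjs_def V_def by simp
  have H: "inj_on p {1..n} \<and> p ` {1..n} \<subseteq> {1..n} \<and>
     (\<forall>c\<in>{1..n}. if c \<in> fst`V then (c, p c)\<in>V else p c \<notin> snd`V \<and> p c \<le> c)"
    unfolding pV
    apply (rule bjs_inv[where V=V and n=n and i=n])
       apply (rule sub, assumption)
      apply (rule colinj, assumption, assumption)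
     apply (rule rowinj, assumption, assumption)
    apply (rule order_refl)
    done
  have inj: "inj_on p {1..n}" using H by (rule conjunct1)
  have rng: "p ` {1..n} \<subseteq> {1..n}" using H by blast
  have prp: "\<forall>c\<in>{1..n}. if c\<in>fst`V then (c,p c)\<in>V else p c \<notin> snd`V \<and> p c \<le> c"
    using H by (rule conjunct2[THEN conjunct2])
  have surj: "p ` {1..n} = {1..n}"
    using card_subset_eq[OF _ rng] card_image[OF inj] by simp
  define m where "m = inv_into {1..n} p k"
  have km: "k \<in> p ` {1..n}" using surj assms(2) by simp
  have m: "m \<in> {1..n}" unfolding m_def using inv_into_into[OF km] .
  have pm: "p m = k" unfolding m_def using f_inv_into_f[OF km] .
  have N: "k \<in> no_valley_rows n w \<longleftrightarrow> k \<notin> snd ` V"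
    unfolding no_valley_rows_def V_def using assms(2) by force
  have key: "k \<notin> snd ` V \<longleftrightarrow> k \<le> m"
  proof
    assume k: "k \<notin> snd ` V"
    have mf: "m \<notin> fst ` V"
    proof
      assume mf: "m \<in> fst ` V" then have "(m, k) \<in> V" using bspec[OF prp m] pm unfolding if_P[OF mf] by blast
      with k show False by force
    qed
    then show "k \<le> m" using bspec[OF prp m] pm unfolding if_not_P[OF mf] by simp
  next
    assume km: "k \<le> m"
    show "k \<notin> snd ` V"
    proof
      assume "k \<in> snd ` V" then obtain c where c: "(c,k) \<in> V" by force
      then have c1: "c \<in> {1..n}" "c < k" using sub[OF c] by auto
      have cf: "c \<in> fst ` V" using c by force
      then have "(c, p c) \<in> V" using bspec[OF prp c1(1)] unfolding if_P[OF cf] by blast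
      then have "p c = k" using colinj c by blast
      then have "m = c" unfolding m_def using inv_into_f_f[OF inj c1(1)] by simp
      with c1 km show False by simp
    qed
  qed
  show ?thesis
    unfolding fixpoint_def deficiency_def p_def[symmetric] m_def[symmetric]
    using N key pm by auto
qed

end
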